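(* Let $f:\mathbb{R}^{m\times n}\to\mathbb{R}$ be smooth and strongly convex, $\omega\neq 0$, and let $S_\omega$, $\mathcal D_\omega$, $\theta_A$ be as in the context. Then: (i) A point $(U_*,V_* )\in\mathcal D_\omega$ is a fixed point of $S_\omega$ if and only if $U_*$ and $V_*$ have full column rank $k$ and $(U_*,V_* )$ is a critical point of $F$; in particular every critical point of $F$ with $U_*,V_*$ of full column rank lies in $\mathcal D_\omega$ and is a fixed point of $S_\omega$. (ii) For every $(U,V)\in\mathcal D_\omega$ and every $A\in\mathrm{GL}(k)$, one has $\theta_A\cdot(U,V)\in\mathcal D_\omega$ and $S_\omega(\theta_A\cdot(U,V))=\theta_A\cdot S_\omega(U,V)$. (iii) Consequently, at a fixed point $(U_*,V_* )$ of $S_\omega$ (where $S_\omega$ is smooth), $S_\omega'(U_*A,V_*A^{-\top})=\theta_A\circ S_\omega'(U_*,V_* )\circ\theta_A^{-1}$, so the derivatives of $S_\omega$ at all points of the orbit $\{\theta_A\cdot(U_*,V_* )\}$ have the same eigenvalues.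
   Context: Let $F(U,V)=f(UV^\top)$ for $U\in\mathbb{R}^{m\times k}$, $V\in\mathbb{R}^{n\times k}$. For $V$ of full column rank, $\hat S_1(V)=\operatorname{argmin}_U F(U,V)$ (unique); for $U$ of full column rank, $\hat S_2(U)=\operatorname{argmin}_V F(U,V)$ (unique). For $\omega\in\mathbb{R}$ define \[ S_\omega(U,V)=(1-\omega)(U,V)+\omega\Big(\hat S_1(V),\ \hat S_2\big((1-\omega)U+\omega\hat S_1(V)\big)\Big), \] defined on $\mathcal D_\omega=\{(U,V): V \text{ and } (1-\omega)U+\omega\hat S_1(V)\text{ have full column rank } k\}$. For $A\in\mathrm{GL}(k)$, $\theta_A\cdot(U,V)=(UA,VA^{-\top})$, a linear invertible map on $\mathbb{R}^{m\times k}\times\mathbb{R}^{n\times k}$ with $\theta_A^{-1}=\theta_{A^{-1}}$. *)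

theory Defs
  imports "HOL-Analysis.Analysis"
begin

primrec iter_dderiv :: "('a::real_normed_vector \<Rightarrow> real) \<Rightarrow> 'a list \<Rightarrow> 'a \<Rightarrow> real" where
  "iter_dderiv f [] = f"
| "iter_dderiv f (h # hs) = (\<lambda>x. frechet_derivative (iter_dderiv f hs) (at x) h)"

definition smooth_fun :: "('a::real_normed_vector \<Rightarrow> real) \<Rightarrow> bool" where
  "smooth_fun f \<longleftrightarrow> (\<forall>hs x. iter_dderiv f hs differentiable (at x))"

text \<open>Strong convexity with respect to the (Frobenius / Euclidean) norm.\<close>
definition strongly_convex :: "('a::real_normed_vector \<Rightarrow> real) \<Rightarrow> bool" where
  "strongly_convex f \<longleftrightarrow> (\<exists>\<mu>>0. convex_on UNIV (\<lambda>x. f x - \<mu> / 2 * (norm x)\<^sup>2))"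

definition Fobj :: "(real^'n^'m \<Rightarrow> real) \<Rightarrow> real^'k^'m \<Rightarrow> real^'k^'n \<Rightarrow> real" where
  "Fobj f U V = f (U ** transpose V)"

definition full_col_rank :: "real^'k^'r \<Rightarrow> bool" where
  "full_col_rank M \<longleftrightarrow> rank M = CARD('k)"

text \<open>Partial minimizers (unique when the other factor has full column rank).\<close>
definition S1hat :: "(real^'n^'m \<Rightarrow> real) \<Rightarrow> real^'k^'n \<Rightarrow> real^'k^'m" where
  "S1hat f V = (THE U. \<forall>U'. Fobj f U V \<le> Fobj f U' V)"

definition S2hat :: "(real^'n^'m \<Rightarrow> real) \<Rightarrow> real^'k^'m \<Rightarrow> real^'k^'n" where
  "S2hat f U = (THE V. \<forall>V'. Fobj f U V \<le> Fobj f U V')"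

definition Somega :: "(real^'n^'m \<Rightarrow> real) \<Rightarrow> real \<Rightarrow> (real^'k^'m) \<times> (real^'k^'n) \<Rightarrow> (real^'k^'m) \<times> (real^'k^'n)" where
  "Somega f \<omega> UV = (let U = fst UV; V = snd UV; U1 = S1hat f V;
                      W = (1 - \<omega>) *\<^sub>R U + \<omega> *\<^sub>R U1
                  in (1 - \<omega>) *\<^sub>R (U, V) + \<omega> *\<^sub>R (U1, S2hat f W))"

definition Domega :: "(real^'n^'m \<Rightarrow> real) \<Rightarrow> real \<Rightarrow> ((real^'k^'m) \<times> (real^'k^'n)) set" where
  "Domega f \<omega> = {(U, V). full_col_rank V \<and>
                     full_col_rank ((1 - \<omega>) *\<^sub>R U + \<omega> *\<^sub>R S1hat f V)}"

definition theta :: "real^'k^'k \<Rightarrow> (real^'k^'m) \<times> (real^'k^'n) \<Rightarrow> (real^'k^'m) \<times> (real^'k^'n)" where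
  "theta A UV = (fst UV ** A, snd UV ** transpose (matrix_inv A))"

definition critical_point :: "(real^'n^'m \<Rightarrow> real) \<Rightarrow> real^'k^'m \<Rightarrow> real^'k^'n \<Rightarrow> bool" where
  "critical_point f U V \<longleftrightarrow>
     ((\<lambda>UV. Fobj f (fst UV) (snd UV)) has_derivative (\<lambda>_. 0)) (at (U, V))"

end

theory Submission
  imports Defs
begin


lemma convex_grad_ineq:
  fixes h :: "'a::real_normed_vector \<Rightarrow> real"
  assumes cv: "convex_on UNIV h" and d: "(h has_derivative h') (at x)"
  shows "h x + h' (y - x) \<le> h y"
proof -
  define g where "g t = h (x + t *\<^sub>R (y - x))" for t::real
  have cg: "convex_on UNIV g"
  proof (rule convex_onI)
    fix t a b :: real assume t: "0 < t" "t < 1"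
    have "x + ((1 - t) *\<^sub>R a + t *\<^sub>R b) *\<^sub>R (y - x)
        = (1 - t) *\<^sub>R (x + a *\<^sub>R (y - x)) + t *\<^sub>R (x + b *\<^sub>R (y - x))"
      by (simp add: algebra_simps)
    then show "g ((1 - t) *\<^sub>R a + t *\<^sub>R b) \<le> (1 - t) * g a + t * g b"
      unfolding g_def using convex_onD[OF cv, of t] t by simp
  qed simp
  have lh: "linear h'" using d by (rule has_derivative_linear)
  have "((\<lambda>t. x + t *\<^sub>R (y - x)) has_derivative (\<lambda>t. t *\<^sub>R (y - x))) (at 0)"
    by (auto intro!: derivative_eq_intros)
  from has_derivative_compose[OF this] d
  have "(g has_derivative (\<lambda>t. h' (t *\<^sub>R (y - x)))) (at 0)"
    unfolding g_def by (simp add: o_def)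
  moreover have "(\<lambda>t. h' (t *\<^sub>R (y - x))) = (*) (h' (y - x))"
    using lh by (auto simp: linear_scale)
  ultimately have "(g has_field_derivative h' (y - x)) (at 0 within UNIV)"
    by (simp add: has_field_derivative_def)
  from convex_on_imp_above_tangent[OF cg _ _ _ this, of 1]
  have "g 1 - g 0 \<ge> h' (y - x) * (1 - 0)" by simp
  then show ?thesis unfolding g_def by simp
qed



lemma strong_grad:
  fixes f :: "'a::real_inner \<Rightarrow> real"
  assumes sc: "strongly_convex f"
  obtains \<mu> where "\<mu> > 0" "\<And>x f' y. (f has_derivative f') (at x) \<Longrightarrow>
      f x + f' (y - x) + \<mu> / 2 * (norm (y - x))\<^sup>2 \<le> f y"
proof -
  obtain \<mu> where mu: "\<mu> > 0" and cv: "convex_on UNIV (\<lambda>x. f x - \<mu> / 2 * (norm x)\<^sup>2)"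
    using sc unfolding strongly_convex_def by blast
  have "f x + f' (y - x) + \<mu> / 2 * (norm (y - x))\<^sup>2 \<le> f y"
    if d: "(f has_derivative f') (at x)" for x f' y
  proof -
    have "((\<lambda>x. f x - \<mu> / 2 * (x \<bullet> x)) has_derivative
            (\<lambda>v. f' v - \<mu> / 2 * (v \<bullet> x + x \<bullet> v))) (at x)"
      by (auto intro!: derivative_eq_intros d)
    then have d2: "((\<lambda>x. f x - \<mu> / 2 * (norm x)\<^sup>2) has_derivative
            (\<lambda>v. f' v - \<mu> / 2 * (v \<bullet> x + x \<bullet> v))) (at x)"
      by (simp add: power2_norm_eq_inner)
    from convex_grad_ineq[OF cv d2, of y]
    have A: "f x - \<mu> / 2 * (x \<bullet> x) + (f' (y - x) - \<mu> / 2 * ((y - x) \<bullet> x + x \<bullet> (y - x)))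
          \<le> f y - \<mu> / 2 * (y \<bullet> y)"
      by (simp add: power2_norm_eq_inner)
    have B: "(y - x) \<bullet> x + x \<bullet> (y - x) = 2 * (x \<bullet> y) - 2 * (x \<bullet> x)"
      by (simp add: inner_diff_left inner_diff_right inner_commute)
    have N: "(norm (y - x))\<^sup>2 = y \<bullet> y - 2 * (x \<bullet> y) + x \<bullet> x"
      by (simp add: power2_norm_eq_inner inner_diff_left inner_diff_right inner_commute)
    show ?thesis
      using A unfolding N B by (simp add: algebra_simps)
  qed
  then show ?thesis using that mu by blast
qed



lemma min_exists:
  fixes f :: "'b::euclidean_space \<Rightarrow> real" and L :: "'a::euclidean_space \<Rightarrow> 'b"
  assumes sc: "strongly_convex f" and diff: "\<And>x. f differentiable (at x)" and lin: "linear L"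
  shows "\<exists>u. \<forall>u'. f (L u) \<le> f (L u')"
proof -
  obtain \<mu> where mu: "\<mu> > 0" and sg: "\<And>x f' y. (f has_derivative f') (at x) \<Longrightarrow>
      f x + f' (y - x) + \<mu> / 2 * (norm (y - x))\<^sup>2 \<le> f y"
    using strong_grad[OF sc] by blast
  obtain f0 where d0: "(f has_derivative f0) (at 0)" using diff[of 0] unfolding differentiable_def by blast
  have "bounded_linear f0" using d0 by (rule has_derivative_bounded_linear)
  then obtain B where B: "B > 0" "\<And>y. norm (f0 y) \<le> norm y * B"
    using bounded_linear.pos_bounded by blast
  define R where "R = 2 * B / \<mu>"
  have big: "f 0 < f y" if "norm y > R" for y
  proof -
    have "f 0 + f0 y + \<mu> / 2 * (norm y)\<^sup>2 \<le> f y" using sg[OF d0, of y] by simp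
    moreover have "- (norm y * B) \<le> f0 y" using B(2)[of y] by simp
    moreover have "norm y * B < \<mu> / 2 * (norm y)\<^sup>2"
    proof -
      have "2 * B < \<mu> * norm y" using that mu unfolding R_def by (simp add: field_simps)
      then have "norm y * (2 * B) < norm y * (\<mu> * norm y)"
        using that B mu unfolding R_def by (intro mult_strict_left_mono) (auto simp: field_simps)
      then show ?thesis by (simp add: power2_eq_square algebra_simps)
    qed
    ultimately show ?thesis by linarith
  qed
  define K where "K = cball 0 R \<inter> range L"
  have "subspace (range L)" using lin by (intro linear_subspace_image subspace_UNIV)
  then have "closed (range L)" by (rule closed_subspace)
  then have cK: "compact K" unfolding K_def by (intro compact_Int_closed) auto
  have "0 \<le> R" unfolding R_def using B mu by auto
  then have "0 \<in> K" unfolding K_def using linear_0[OF lin] by (auto intro: range_eqI[of _ _ 0])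
  have "continuous_on K f"
    using diff differentiable_imp_continuous_within continuous_at_imp_continuous_on by blast
  then obtain y where y: "y \<in> K" "\<And>z. z \<in> K \<Longrightarrow> f y \<le> f z"
    using continuous_attains_inf[OF cK] \<open>0 \<in> K\<close> by blast
  then obtain u where u: "y = L u" unfolding K_def by auto
  have "f (L u) \<le> f (L u')" for u'
  proof (cases "norm (L u') \<le> R")
    case True then show ?thesis using y u unfolding K_def by auto
  next
    case False
    then have "f 0 < f (L u')" using big by simp
    moreover have "f y \<le> f 0" using y(2)[OF \<open>0 \<in> K\<close>] .
    ultimately show ?thesis using u by simp
  qed
  then show ?thesis by blast
qed

lemma comp_deriv:
  fixes f :: "'b::euclidean_space \<Rightarrow> real" and L :: "'a::euclidean_space \<Rightarrow> 'b"
  assumes "(f has_derivative f') (at (L u))" and lin: "linear L"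
  shows "((\<lambda>u. f (L u)) has_derivative (\<lambda>h. f' (L h))) (at u)"
proof -
  have "bounded_linear L" using lin by (simp add: linear_conv_bounded_linear)
  then have "(L has_derivative L) (at u)" by (rule bounded_linear_imp_has_derivative)
  from has_derivative_compose[OF this assms(1)] show ?thesis by (simp add: o_def)
qed

lemma min_unique:
  fixes f :: "'b::euclidean_space \<Rightarrow> real" and L :: "'a::euclidean_space \<Rightarrow> 'b"
  assumes sc: "strongly_convex f" and diff: "\<And>x. f differentiable (at x)" and lin: "linear L"
    and inj: "inj L" and mu: "\<forall>u'. f (L u) \<le> f (L u')" and mv: "\<forall>u'. f (L v) \<le> f (L u')"
  shows "u = v"
proof -
  obtain \<mu> where mu0: "\<mu> > 0" and sg: "\<And>x f' y. (f has_derivative f') (at x) \<Longrightarrow>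
      f x + f' (y - x) + \<mu> / 2 * (norm (y - x))\<^sup>2 \<le> f y"
    using strong_grad[OF sc] by blast
  obtain f' where d: "(f has_derivative f') (at (L u))" using diff unfolding differentiable_def by blast
  have "(\<lambda>h. f' (L h)) = (\<lambda>h. 0)"
    by (rule differential_zero_maxmin[of u UNIV, OF _ _ comp_deriv[OF d lin]]) (use mu in auto)
  then have z: "f' (L (v - u)) = 0" by meson
  have "f (L u) + f' (L v - L u) + \<mu> / 2 * (norm (L v - L u))\<^sup>2 \<le> f (L v)" by (rule sg[OF d])
  moreover have "f' (L v - L u) = 0" using z linear_diff[OF lin, of v u] by simp
  moreover have "f (L v) \<le> f (L u)" using mv by blast
  ultimately have "\<mu> / 2 * (norm (L v - L u))\<^sup>2 \<le> 0" by linarith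
  moreover have "norm (L v - L u) \<noteq> 0 \<Longrightarrow> 0 < \<mu> / 2 * (norm (L v - L u))\<^sup>2"
    using mu0 by simp
  ultimately have "norm (L v - L u) = 0" by linarith
  then show ?thesis using inj by (auto dest: injD)
qed

lemma crit_min:
  fixes f :: "'b::euclidean_space \<Rightarrow> real" and L :: "'a::euclidean_space \<Rightarrow> 'b"
  assumes sc: "strongly_convex f" and diff: "\<And>x. f differentiable (at x)" and lin: "linear L"
    and d0: "((\<lambda>u. f (L u)) has_derivative (\<lambda>_. 0)) (at u)"
  shows "f (L u) \<le> f (L u')"
proof -
  obtain \<mu> where mu0: "\<mu> > 0" and sg: "\<And>x f' y. (f has_derivative f') (at x) \<Longrightarrow>
      f x + f' (y - x) + \<mu> / 2 * (norm (y - x))\<^sup>2 \<le> f y"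
    using strong_grad[OF sc] by blast
  obtain f' where d: "(f has_derivative f') (at (L u))" using diff unfolding differentiable_def by blast
  have "(\<lambda>h. f' (L h)) = (\<lambda>_. 0)" using has_derivative_unique[OF comp_deriv[OF d lin] d0] .
  then have z: "f' (L (u' - u)) = 0" by meson
  have "f (L u) + f' (L u' - L u) + \<mu> / 2 * (norm (L u' - L u))\<^sup>2 \<le> f (L u')" by (rule sg[OF d])
  moreover have "0 \<le> \<mu> / 2 * (norm (L u' - L u))\<^sup>2" using mu0 by simp
  ultimately show ?thesis using z linear_diff[OF lin, of u' u] by simp
qed



lemma matrix_add_rdistrib': "((A::real^'n^'m) + B) ** C = A ** C + B ** (C::real^'p^'n)"
  by (simp add: vec_eq_iff matrix_matrix_mult_def sum.distrib distrib_right)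

lemma linear_rmul: "linear (\<lambda>X::real^'n^'m. X ** (C::real^'p^'n))"
  by (rule linearI) (simp_all add: matrix_add_rdistrib' scalar_matrix_assoc)

lemma linear_lmul_t: "linear (\<lambda>Y::real^'k^'n. (U::real^'k^'m) ** transpose Y)"
  by (rule linearI) (simp_all add: matrix_add_ldistrib transpose_def matrix_scalar_ac vec_eq_iff
      matrix_matrix_mult_def sum.distrib distrib_left sum_distrib_left algebra_simps)

lemma rows_mult_transpose: "(X::real^'k^'m) ** transpose (V::real^'k^'n) = (\<chi> i. V *v (X $ i))"
  by (simp add: vec_eq_iff matrix_matrix_mult_def matrix_vector_mult_def transpose_def mult.commute)

lemma inj_rmul_t:
  assumes "full_col_rank (V::real^'k^'n)"
  shows "inj (\<lambda>X::real^'k^'m. X ** transpose V)"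
proof
  fix X Y :: "real^'k^'m" assume "X ** transpose V = Y ** transpose V"
  then have e: "\<And>i. V *v (X $ i) = V *v (Y $ i)" unfolding rows_mult_transpose
    by (metis vec_lambda_beta)
  have "inj ((*v) V)" using assms by (simp add: full_col_rank_def full_rank_injective)
  then have "\<And>i. X $ i = Y $ i" using e by (meson injD)
  then show "X = Y" by (simp add: vec_eq_iff)
qed

lemma inj_lmul_t:
  assumes "full_col_rank (U::real^'k^'m)"
  shows "inj (\<lambda>Y::real^'k^'n. U ** transpose Y)"
proof
  fix X Y :: "real^'k^'n" assume "U ** transpose X = U ** transpose Y"
  then have "transpose (U ** transpose X) = transpose (U ** transpose Y)" by simp
  then have "X ** transpose U = Y ** transpose U" by (simp add: matrix_transpose_mul)
  then show "X = Y" using inj_rmul_t[OF assms] by (auto dest: injD)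
qed

context
  fixes f :: "real^'n^'m \<Rightarrow> real"
  assumes sc: "strongly_convex f" and diff: "\<And>x. f differentiable (at x)"
begin

lemma S1hat_char:
  assumes "full_col_rank (V::real^'k^'n)"
  shows "(\<forall>U'. Fobj f U V \<le> Fobj f U' V) \<longleftrightarrow> S1hat f V = U"
proof -
  let ?L = "\<lambda>X::real^'k^'m. X ** transpose V"
  have ex: "\<exists>!U. \<forall>U'. Fobj f U V \<le> Fobj f U' V"
    using min_exists[OF sc diff linear_rmul, of "transpose V"]
      min_unique[OF sc diff linear_rmul inj_rmul_t[OF assms]]
    unfolding Fobj_def by metis
  show ?thesis
  proof
    assume "\<forall>U'. Fobj f U V \<le> Fobj f U' V"
    then show "S1hat f V = U" unfolding S1hat_def using ex by (auto intro: the1_equality)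
  next
    assume "S1hat f V = U"
    then show "\<forall>U'. Fobj f U V \<le> Fobj f U' V" unfolding S1hat_def using theI'[OF ex] by simp
  qed
qed

lemma S2hat_char:
  assumes "full_col_rank (U::real^'k^'m)"
  shows "(\<forall>V'. Fobj f U V \<le> Fobj f U V') \<longleftrightarrow> S2hat f U = (V::real^'k^'n)"
proof -
  have ex: "\<exists>!V::real^'k^'n. \<forall>V'. Fobj f U V \<le> Fobj f U V'"
    using min_exists[OF sc diff linear_lmul_t, of U]
      min_unique[OF sc diff linear_lmul_t inj_lmul_t[OF assms]]
    unfolding Fobj_def by metis
  show ?thesis
  proof
    assume "\<forall>V'. Fobj f U V \<le> Fobj f U V'"
    then show "S2hat f U = V" unfolding S2hat_def using ex by (auto intro: the1_equality)
  next
    assume "S2hat f U = V"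
    then show "\<forall>V'. Fobj f U V \<le> Fobj f U V'" unfolding S2hat_def using theI'[OF ex] by simp
  qed
qed

end



lemma bb_mult_t: "bounded_bilinear (\<lambda>(X::real^'k^'m) (Y::real^'k^'n). X ** transpose Y)"
proof -
  have "bilinear (\<lambda>(X::real^'k^'m) (Y::real^'k^'n). X ** transpose Y)"
    unfolding bilinear_def using linear_lmul_t linear_rmul by blast
  then show ?thesis by (simp add: bilinear_conv_bounded_bilinear)
qed

lemma G_deriv:
  fixes f :: "real^'n^'m \<Rightarrow> real" and U :: "real^'k^'m" and V :: "real^'k^'n"
  assumes d: "(f has_derivative f') (at (U ** transpose V))"
  shows "((\<lambda>p. Fobj f (fst p) (snd p)) has_derivative
           (\<lambda>h. f' (U ** transpose (snd h) + fst h ** transpose V))) (at (U, V))"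
proof -
  have "((\<lambda>p::(real^'k^'m) \<times> (real^'k^'n). fst p ** transpose (snd p)) has_derivative
           (\<lambda>h. U ** transpose (snd h) + fst h ** transpose V)) (at (U, V))"
    using bounded_bilinear.FDERIV[OF bb_mult_t, of fst "\<lambda>h. fst h" "(U,V)" UNIV snd "\<lambda>h. snd h"]
    by (simp add: has_derivative_fst has_derivative_snd has_derivative_ident)
  from has_derivative_compose[OF this] d show ?thesis
    by (simp add: Fobj_def o_def)
qed

context
  fixes f :: "real^'n^'m \<Rightarrow> real"
  assumes sc: "strongly_convex f" and diff: "\<And>x. f differentiable (at x)"
begin

lemma crit_iff:
  fixes U :: "real^'k^'m" and V :: "real^'k^'n"
  assumes rU: "full_col_rank U" and rV: "full_col_rank V"
  shows "critical_point f U V \<longleftrightarrow> (S1hat f V = U \<and> S2hat f U = V)"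
proof -
  obtain f' where d: "(f has_derivative f') (at (U ** transpose V))"
    using diff unfolding differentiable_def by blast
  have lf: "linear f'" using d by (rule has_derivative_linear)
  have dU: "((\<lambda>X. f (X ** transpose V)) has_derivative (\<lambda>h. f' (h ** transpose V))) (at U)"
    using comp_deriv[OF _ linear_rmul, of f f' U "transpose V"] d by simp
  have dV: "((\<lambda>Y. f (U ** transpose Y)) has_derivative (\<lambda>h. f' (U ** transpose h))) (at V)"
    using comp_deriv[OF _ linear_lmul_t, of f f' U V] d by simp
  show ?thesis
  proof
    assume "critical_point f U V"
    then have "(\<lambda>h. f' (U ** transpose (snd h) + fst h ** transpose V)) = (\<lambda>_. 0)"
      unfolding critical_point_def using has_derivative_unique[OF G_deriv[OF d]] by blast
    then have z: "\<And>a b. f' (U ** transpose b + a ** transpose V) = 0"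
      by (metis fst_conv snd_conv)
    have z1: "f' (a ** transpose V) = 0" for a using z[of 0 a] linear_0[OF linear_lmul_t, of U] by (metis add.left_neutral)
    have z2: "f' (U ** transpose b) = 0" for b using z[of b 0] linear_0[OF linear_rmul, of "transpose V"] by (metis add.right_neutral)
    have "(\<lambda>h. f' (h ** transpose V)) = (\<lambda>_. 0)" using z1 by auto
    then have "((\<lambda>X. f (X ** transpose V)) has_derivative (\<lambda>_. 0)) (at U)" using dU by simp
    then have "\<forall>U'. Fobj f U V \<le> Fobj f U' V"
      unfolding Fobj_def using crit_min[OF sc diff linear_rmul] by blast
    then have 1: "S1hat f V = U" using S1hat_char[OF sc diff rV] by blast
    have "(\<lambda>h. f' (U ** transpose h)) = (\<lambda>_. 0)" using z2 by auto
    then have "((\<lambda>Y. f (U ** transpose Y)) has_derivative (\<lambda>_. 0)) (at V)" using dV by simp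
    then have "\<forall>V'. Fobj f U V \<le> Fobj f U V'"
      unfolding Fobj_def using crit_min[OF sc diff linear_lmul_t] by blast
    then have 2: "S2hat f U = V" using S2hat_char[OF sc diff rU] by blast
    show "S1hat f V = U \<and> S2hat f U = V" using 1 2 by simp
  next
    assume a: "S1hat f V = U \<and> S2hat f U = V"
    then have m1: "\<forall>U'. f (U ** transpose V) \<le> f (U' ** transpose V)"
      using S1hat_char[OF sc diff rV] unfolding Fobj_def by blast
    have m2: "\<forall>V'. f (U ** transpose V) \<le> f (U ** transpose V')"
      using a S2hat_char[OF sc diff rU] unfolding Fobj_def by blast
    have z1: "(\<lambda>h. f' (h ** transpose V)) = (\<lambda>_. 0)"
      by (rule differential_zero_maxmin[of U UNIV, OF _ _ dU]) (use m1 in auto)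
    have z2: "(\<lambda>h. f' (U ** transpose h)) = (\<lambda>_. 0)"
      by (rule differential_zero_maxmin[of V UNIV, OF _ _ dV]) (use m2 in auto)
    have "(\<lambda>h. f' (U ** transpose (snd h) + fst h ** transpose V)) = (\<lambda>_. 0)"
    proof
      fix h :: "(real^'k^'m) \<times> (real^'k^'n)"
      have "f' (U ** transpose (snd h) + fst h ** transpose V)
          = f' (U ** transpose (snd h)) + f' (fst h ** transpose V)"
        using lf by (simp add: linear_add)
      also have "\<dots> = 0" using fun_cong[OF z1, of "fst h"] fun_cong[OF z2, of "snd h"] by simp
      finally show "f' (U ** transpose (snd h) + fst h ** transpose V) = 0" .
    qed
    then show "critical_point f U V"
      unfolding critical_point_def using G_deriv[OF d] by simp
  qed
qed

end



lemma Somega_fst: "fst (Somega f \<omega> (U, V)) = (1 - \<omega>) *\<^sub>R U + \<omega> *\<^sub>R S1hat f V"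
  by (simp add: Somega_def Let_def)

lemma Somega_snd: "snd (Somega f \<omega> (U, V)) =
   (1 - \<omega>) *\<^sub>R V + \<omega> *\<^sub>R S2hat f ((1 - \<omega>) *\<^sub>R U + \<omega> *\<^sub>R S1hat f V)"
  by (simp add: Somega_def Let_def)

lemma relax_fix:
  fixes U X :: "'a::real_vector"
  assumes "\<omega> \<noteq> 0"
  shows "(1 - \<omega>) *\<^sub>R U + \<omega> *\<^sub>R X = U \<longleftrightarrow> X = U"
proof -
  have "(1 - \<omega>) *\<^sub>R U + \<omega> *\<^sub>R X = U + \<omega> *\<^sub>R (X - U)"
    by (simp add: algebra_simps)
  then show ?thesis using assms by simp
qed

lemma Somega_fixed_iff:
  assumes "\<omega> \<noteq> 0"
  shows "Somega f \<omega> (U, V) = (U, V) \<longleftrightarrow> S1hat f V = U \<and> S2hat f U = V"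
proof -
  have "Somega f \<omega> (U, V) = (U, V) \<longleftrightarrow>
      fst (Somega f \<omega> (U, V)) = U \<and> snd (Somega f \<omega> (U, V)) = V"
    by (metis prod.collapse prod.inject)
  also have "\<dots> \<longleftrightarrow> S1hat f V = U \<and> S2hat f U = V"
    unfolding Somega_fst Somega_snd using relax_fix[OF assms] by (metis scaleR_collapse)
  finally show ?thesis .
qed

lemma inv_props:
  fixes A :: "real^'k^'k"
  assumes "invertible A"
  shows "A ** matrix_inv A = mat 1" "matrix_inv A ** A = mat 1"
proof -
  have "\<exists>A'. A ** A' = mat 1 \<and> A' ** A = mat 1" using assms unfolding invertible_def by blast
  from someI_ex[OF this] show "A ** matrix_inv A = mat 1" "matrix_inv A ** A = mat 1"
    unfolding matrix_inv_def by auto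
qed

lemma full_rank_mult_inv:
  fixes X :: "real^'k^'r" and C :: "real^'k^'k"
  assumes "full_col_rank X" "invertible C"
  shows "full_col_rank (X ** C)"
proof -
  have "inj ((*v) X)" using assms by (simp add: full_col_rank_def full_rank_injective)
  moreover have "inj ((*v) C)" using assms by (simp add: inj_matrix_vector_mult)
  ultimately have "inj ((*v) X \<circ> (*v) C)" by (rule inj_compose)
  moreover have "(*v) X \<circ> (*v) C = (*v) (X ** C)" by (auto simp: matrix_vector_mul_assoc)
  ultimately show ?thesis by (simp add: full_col_rank_def full_rank_injective)
qed

lemma lincomb_rmul:
  "(a *\<^sub>R (X::real^'k^'r) + b *\<^sub>R Y) ** (C::real^'p^'k) = a *\<^sub>R (X ** C) + b *\<^sub>R (Y ** C)"
  by (simp add: matrix_add_rdistrib' scalar_matrix_assoc)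

context
  fixes f :: "real^'n^'m \<Rightarrow> real"
  assumes sc: "strongly_convex f" and diff: "\<And>x. f differentiable (at x)"
begin

lemma S1hat_equiv:
  fixes V :: "real^'k^'n" and A :: "real^'k^'k"
  assumes rV: "full_col_rank V" and A: "invertible A"
  shows "S1hat f (V ** transpose (matrix_inv A)) = S1hat f V ** A"
proof -
  let ?Ai = "matrix_inv A"
  have iAi: "invertible ?Ai" using inv_props[OF A] unfolding invertible_def by blast
  have rVB: "full_col_rank (V ** transpose ?Ai)"
    using full_rank_mult_inv[OF rV transpose_invertible[OF iAi]] .
  have eq: "Fobj f X (V ** transpose ?Ai) = Fobj f (X ** ?Ai) V" for X :: "real^'k^'m"
    by (simp add: Fobj_def matrix_transpose_mul matrix_mul_assoc)
  have m: "\<forall>U'. Fobj f (S1hat f V) V \<le> Fobj f U' V" using S1hat_char[OF sc diff rV] by blast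
  have "\<forall>U'. Fobj f (S1hat f V ** A) (V ** transpose ?Ai) \<le> Fobj f U' (V ** transpose ?Ai)"
    unfolding eq using m by (simp add: matrix_mul_assoc[symmetric] inv_props[OF A])
  then show ?thesis using S1hat_char[OF sc diff rVB] by blast
qed

lemma S2hat_equiv:
  fixes W :: "real^'k^'m" and A :: "real^'k^'k"
  assumes rW: "full_col_rank W" and A: "invertible A"
  shows "S2hat f (W ** A) = (S2hat f W :: real^'k^'n) ** transpose (matrix_inv A)"
proof -
  let ?Ai = "matrix_inv A"
  have rWA: "full_col_rank (W ** A)" using full_rank_mult_inv[OF rW A] .
  have eq: "Fobj f (W ** A) Y = Fobj f W (Y ** transpose A)" for Y :: "real^'k^'n"
    by (simp add: Fobj_def matrix_transpose_mul matrix_mul_assoc)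
  have m: "\<forall>V'. Fobj f W (S2hat f W) \<le> Fobj f W (V'::real^'k^'n)" using S2hat_char[OF sc diff rW] by blast
  have c: "S2hat f W ** transpose ?Ai ** transpose A = (S2hat f W :: real^'k^'n)"
    by (simp add: matrix_mul_assoc[symmetric] matrix_transpose_mul[symmetric] inv_props[OF A])
  have "\<forall>V'. Fobj f (W ** A) (S2hat f W ** transpose ?Ai) \<le> Fobj f (W ** A) (V'::real^'k^'n)"
    unfolding eq c using m by simp
  then show ?thesis using S2hat_char[OF sc diff rWA] by blast
qed

lemma Somega_equiv:
  fixes UV :: "(real^'k^'m) \<times> (real^'k^'n)" and A :: "real^'k^'k"
  assumes D: "UV \<in> Domega f \<omega>" and A: "invertible A"
  shows "theta A UV \<in> Domega f \<omega> \<and> Somega f \<omega> (theta A UV) = theta A (Somega f \<omega> UV)"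
proof -
  obtain U V where UV: "UV = (U, V)" by (cases UV)
  let ?B = "transpose (matrix_inv A)"
  have rV: "full_col_rank V" and rW: "full_col_rank ((1 - \<omega>) *\<^sub>R U + \<omega> *\<^sub>R S1hat f V)"
    using D unfolding UV Domega_def by auto
  have iAi: "invertible (matrix_inv A)" using inv_props[OF A] unfolding invertible_def by blast
  have th: "theta A UV = (U ** A, V ** ?B)" unfolding UV theta_def by simp
  have s1: "S1hat f (V ** ?B) = S1hat f V ** A" by (rule S1hat_equiv[OF rV A])
  have W: "(1 - \<omega>) *\<^sub>R (U ** A) + \<omega> *\<^sub>R S1hat f (V ** ?B)
      = ((1 - \<omega>) *\<^sub>R U + \<omega> *\<^sub>R S1hat f V) ** A"
    unfolding s1 lincomb_rmul ..
  have mem: "theta A UV \<in> Domega f \<omega>"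
    unfolding th Domega_def
    using full_rank_mult_inv[OF rV transpose_invertible[OF iAi]] full_rank_mult_inv[OF rW A]
    by (simp add: W)
  have s2: "S2hat f (((1 - \<omega>) *\<^sub>R U + \<omega> *\<^sub>R S1hat f V) ** A)
      = S2hat f ((1 - \<omega>) *\<^sub>R U + \<omega> *\<^sub>R S1hat f V) ** ?B"
    by (rule S2hat_equiv[OF rW A])
  have "Somega f \<omega> (theta A UV) = theta A (Somega f \<omega> UV)"
  proof (rule prod_eqI)
    show "fst (Somega f \<omega> (theta A UV)) = fst (theta A (Somega f \<omega> UV))"
      unfolding th UV Somega_fst using W by (simp add: theta_def Somega_fst)
    show "snd (Somega f \<omega> (theta A UV)) = snd (theta A (Somega f \<omega> UV))"
    proof -
      have "snd (Somega f \<omega> (theta A UV)) = (1 - \<omega>) *\<^sub>R (V ** ?B) + \<omega> *\<^sub>R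
           S2hat f (((1 - \<omega>) *\<^sub>R U + \<omega> *\<^sub>R S1hat f V) ** A)"
        unfolding th Somega_snd W ..
      also have "\<dots> = ((1 - \<omega>) *\<^sub>R V + \<omega> *\<^sub>R
           S2hat f ((1 - \<omega>) *\<^sub>R U + \<omega> *\<^sub>R S1hat f V)) ** ?B"
        by (subst s2) (rule lincomb_rmul[symmetric])
      also have "\<dots> = snd (theta A (Somega f \<omega> UV))"
        unfolding UV theta_def Somega_snd by simp
      finally show ?thesis .
    qed
  qed
  then show ?thesis using mem by simp
qed

end



lemma bilinear_mv: "bounded_bilinear (\<lambda>(N::real^'k^'r) (x::real^'k). N *v x)"
proof -
  have "bilinear (\<lambda>(N::real^'k^'r) (x::real^'k). N *v x)"
    unfolding bilinear_def
  proof (intro conjI allI)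
    fix N :: "real^'k^'r" show "linear (\<lambda>x. N *v x)" by (rule matrix_vector_mul_linear)
  next
    fix x :: "real^'k" show "linear (\<lambda>N::real^'k^'r. N *v x)"
      by (rule linearI) (simp_all add: vec_eq_iff matrix_vector_mult_def sum.distrib algebra_simps
          sum_distrib_left)
  qed
  then show ?thesis by (simp add: bilinear_conv_bounded_bilinear)
qed

lemma open_full_rank: "open {M::real^'k^'r. full_col_rank M}"
proof (rule openI)
  fix M :: "real^'k^'r" assume "M \<in> {M. full_col_rank M}"
  then have "inj ((*v) M)" by (simp add: full_col_rank_def full_rank_injective)
  then obtain c where c: "c > 0" "\<And>x. c * norm x \<le> norm (M *v x)"
    using linear_inj_bounded_below_pos[OF matrix_vector_mul_linear] by blast
  obtain K where K: "K > 0" "\<And>N x. norm ((N::real^'k^'r) *v (x::real^'k)) \<le> norm N * norm x * K"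
    using bounded_bilinear.pos_bounded[OF bilinear_mv] by blast
  define e where "e = c / K"
  have "ball M e \<subseteq> {M. full_col_rank M}"
  proof
    fix N assume "N \<in> ball M e"
    then have dN: "norm (N - M) < e" by (simp add: dist_norm norm_minus_commute)
    have "N *v x \<noteq> 0" if "x \<noteq> 0" for x
    proof
      assume z: "N *v x = 0"
      have "(N - M) *v x = N *v x - M *v x"
        by (simp add: vec_eq_iff matrix_vector_mult_def sum_subtractf algebra_simps)
      then have "norm (M *v x) = norm ((N - M) *v x)" using z by simp
      also have "\<dots> \<le> norm (N - M) * norm x * K" using K(2) .
      also have "\<dots> < e * norm x * K" using dN that K(1) by (simp add: mult_strict_right_mono)
      also have "\<dots> = c * norm x" unfolding e_def using K(1) by simp
      finally show False using c(2)[of x] by simp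
    qed
    then have "\<not> (\<exists>x. x \<noteq> 0 \<and> N *v x = 0)" by blast
    then show "N \<in> {M. full_col_rank M}"
      using matrix_nonfull_linear_equations_eq[of N] by (simp add: full_col_rank_def)
  qed
  moreover have "e > 0" unfolding e_def using c K by simp
  ultimately show "\<exists>e>0. ball M e \<subseteq> {M. full_col_rank M}" by blast
qed

lemma inv_inv:
  fixes A :: "real^'k^'k"
  assumes "invertible A"
  shows "matrix_inv (matrix_inv A) = A"
proof -
  have iAi: "invertible (matrix_inv A)" using inv_props[OF assms] unfolding invertible_def by blast
  have "A = A ** (matrix_inv A ** matrix_inv (matrix_inv A))" using inv_props[OF iAi] by simp
  also have "\<dots> = matrix_inv (matrix_inv A)"
    by (simp add: matrix_mul_assoc inv_props[OF assms])
  finally show ?thesis by simp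
qed

lemma theta_inv:
  fixes A :: "real^'k^'k" and z :: "(real^'k^'m) \<times> (real^'k^'n)"
  assumes "invertible A"
  shows "theta A (theta (matrix_inv A) z) = z" "theta (matrix_inv A) (theta A z) = z"
proof -
  have t: "transpose P ** transpose Q = mat 1" if "Q ** P = mat 1" for P Q :: "real^'k^'k"
    using that by (metis matrix_transpose_mul transpose_mat)
  show "theta A (theta (matrix_inv A) z) = z" "theta (matrix_inv A) (theta A z) = z"
    by (simp_all add: theta_def inv_inv[OF assms] matrix_mul_assoc[symmetric] inv_props[OF assms]
        t prod_eq_iff)
qed

lemma linear_theta: "linear (theta C :: (real^'k^'m) \<times> (real^'k^'n) \<Rightarrow> _)"
  by (rule linearI) (simp_all add: theta_def matrix_add_rdistrib' scalar_matrix_assoc)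

lemma bl_theta: "bounded_linear (theta C :: (real^'k^'m) \<times> (real^'k^'n) \<Rightarrow> _)"
  using linear_theta by (simp add: linear_conv_bounded_linear)

context
  fixes f :: "real^'n^'m \<Rightarrow> real"
  assumes sc: "strongly_convex f" and diff: "\<And>x. f differentiable (at x)"
begin

lemma deriv_equiv:
  fixes UV :: "(real^'k^'m) \<times> (real^'k^'n)" and A :: "real^'k^'k"
  assumes D: "UV \<in> Domega f \<omega>" and dS: "(Somega f \<omega> has_derivative Df) (at UV)"
    and A: "invertible A"
  shows "(Somega f \<omega> has_derivative (theta A \<circ> Df \<circ> theta (matrix_inv A))) (at (theta A UV))"
proof -
  let ?S = "Somega f \<omega>" and ?T = "theta A :: (real^'k^'m) \<times> (real^'k^'n) \<Rightarrow> _"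
    and ?Ti = "theta (matrix_inv A) :: (real^'k^'m) \<times> (real^'k^'n) \<Rightarrow> _"
  define FR1 where "FR1 = {M::real^'k^'m. full_col_rank M}"
  define FR2 where "FR2 = {M::real^'k^'n. full_col_rank M}"
  have "isCont ?S UV" using dS by (rule has_derivative_continuous)
  then have "isCont (\<lambda>y. fst (?S y)) UV" by (intro continuous_intros)
  moreover have "open FR1" "fst (?S UV) \<in> FR1"
    using open_full_rank D unfolding FR1_def Domega_def by (auto simp: Somega_fst split: prod.splits)
  ultimately obtain N1 where N1: "open N1" "UV \<in> N1" "\<And>y. y \<in> N1 \<Longrightarrow> fst (?S y) \<in> FR1"
    unfolding continuous_at_open by metis
  define N where "N = N1 \<inter> (UNIV \<times> FR2)"
  have oN: "open N" unfolding N_def FR2_def using N1(1) open_full_rank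
    by (intro open_Int open_Times) auto
  have UVN: "UV \<in> N" using N1(2) D unfolding N_def FR2_def Domega_def by auto
  have ND: "y \<in> Domega f \<omega>" if "y \<in> N" for y
  proof -
    obtain a b where y: "y = (a, b)" by (cases y)
    show ?thesis using that N1(3)[of y] unfolding N_def FR1_def FR2_def Domega_def y
      by (auto simp: Somega_fst)
  qed
  have blTi: "bounded_linear ?Ti" by (rule bl_theta)
  have blT: "bounded_linear ?T" by (rule bl_theta)
  define N' where "N' = ?Ti -` N"
  have oN': "open N'" unfolding N'_def
    using open_vimage[OF oN linear_continuous_on[OF blTi]] by simp
  have TN': "?T UV \<in> N'" unfolding N'_def using UVN theta_inv(2)[OF A, of UV] by simp
  have eq: "?T (?S (?Ti z)) = ?S z" if "z \<in> N'" for z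
  proof -
    have "?Ti z \<in> Domega f \<omega>" using that ND unfolding N'_def by simp
    from Somega_equiv[OF sc diff this A] have "?S (?T (?Ti z)) = ?T (?S (?Ti z))" by simp
    then show ?thesis using theta_inv(1)[OF A, of z] by simp
  qed
  have d1: "(?Ti has_derivative ?Ti) (at (?T UV))" by (rule bounded_linear_imp_has_derivative[OF blTi])
  have dS': "(?S has_derivative Df) (at (?Ti (?T UV)))" using dS theta_inv(2)[OF A, of UV] by simp
  have d2: "((\<lambda>z. ?S (?Ti z)) has_derivative (\<lambda>h. Df (?Ti h))) (at (?T UV))"
    using has_derivative_compose[OF d1 dS'] by (simp add: o_def)
  have d3: "((\<lambda>z. ?T (?S (?Ti z))) has_derivative (\<lambda>h. ?T (Df (?Ti h)))) (at (?T UV))"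
    using has_derivative_compose[OF d2 bounded_linear_imp_has_derivative[OF blT]] by (simp add: o_def)
  have "(?S has_derivative (\<lambda>h. ?T (Df (?Ti h)))) (at (?T UV))"
    by (rule has_derivative_transform_within_open[OF d3 oN' TN']) (use eq in simp)
  then show ?thesis by (simp add: o_def)
qed

end


theorem mainTheorem2:
  fixes f :: "real^'n^'m \<Rightarrow> real" and \<omega> :: real
  assumes smooth: "smooth_fun f"
    and sconv: "strongly_convex f"
    and omega: "\<omega> \<noteq> 0"
  shows
    "(\<forall>(U::real^'k^'m) (V::real^'k^'n). (U, V) \<in> Domega f \<omega> \<longrightarrow>
        (Somega f \<omega> (U, V) = (U, V) \<longleftrightarrow>
           full_col_rank U \<and> full_col_rank V \<and> critical_point f U V))
   \<and> (\<forall>(U::real^'k^'m) (V::real^'k^'n).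
        full_col_rank U \<and> full_col_rank V \<and> critical_point f U V \<longrightarrow>
        (U, V) \<in> Domega f \<omega> \<and> Somega f \<omega> (U, V) = (U, V))
   \<and> (\<forall>(UV::(real^'k^'m) \<times> (real^'k^'n)) (A::real^'k^'k). UV \<in> Domega f \<omega> \<and> invertible A \<longrightarrow>
        theta A UV \<in> Domega f \<omega> \<and> Somega f \<omega> (theta A UV) = theta A (Somega f \<omega> UV))
   \<and> (\<forall>(UV::(real^'k^'m) \<times> (real^'k^'n)) (A::real^'k^'k) D.
        UV \<in> Domega f \<omega> \<and> Somega f \<omega> UV = UV \<and> (Somega f \<omega> has_derivative D) (at UV)
        \<and> invertible A \<longrightarrow>
        (Somega f \<omega> has_derivative (theta A \<circ> D \<circ> theta (matrix_inv A))) (at (theta A UV)))"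
  proof -
  have diff: "\<And>x. f differentiable (at x)"
    using smooth unfolding smooth_fun_def by (metis iter_dderiv.simps(1))
  have p1: "\<forall>(U::real^'k^'m) (V::real^'k^'n). (U, V) \<in> Domega f \<omega> \<longrightarrow>
        (Somega f \<omega> (U, V) = (U, V) \<longleftrightarrow>
           full_col_rank U \<and> full_col_rank V \<and> critical_point f U V)"
  proof (intro allI impI)
    fix U :: "real^'k^'m" and V :: "real^'k^'n"
    assume D: "(U, V) \<in> Domega f \<omega>"
    then have rV: "full_col_rank V" and rW: "full_col_rank ((1 - \<omega>) *\<^sub>R U + \<omega> *\<^sub>R S1hat f V)"
      unfolding Domega_def by auto
    show "Somega f \<omega> (U, V) = (U, V) \<longleftrightarrow> full_col_rank U \<and> full_col_rank V \<and> critical_point f U V"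
    proof
      assume "Somega f \<omega> (U, V) = (U, V)"
      then have e: "S1hat f V = U \<and> S2hat f U = V" using Somega_fixed_iff[OF omega] by blast
      then have rU: "full_col_rank U" using rW by (simp add: scaleR_collapse)
      show "full_col_rank U \<and> full_col_rank V \<and> critical_point f U V"
        using rU rV e crit_iff[OF sconv diff rU rV] by blast
    next
      assume "full_col_rank U \<and> full_col_rank V \<and> critical_point f U V"
      then show "Somega f \<omega> (U, V) = (U, V)"
        using crit_iff[OF sconv diff] Somega_fixed_iff[OF omega] by blast
    qed
  qed
  have p2: "\<forall>(U::real^'k^'m) (V::real^'k^'n).
        full_col_rank U \<and> full_col_rank V \<and> critical_point f U V \<longrightarrow>
        (U, V) \<in> Domega f \<omega> \<and> Somega f \<omega> (U, V) = (U, V)"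
  proof (intro allI impI)
    fix U :: "real^'k^'m" and V :: "real^'k^'n"
    assume a: "full_col_rank U \<and> full_col_rank V \<and> critical_point f U V"
    then have e: "S1hat f V = U \<and> S2hat f U = V" using crit_iff[OF sconv diff] by blast
    have "Somega f \<omega> (U, V) = (U, V)" using e Somega_fixed_iff[OF omega] by blast
    moreover have "(U, V) \<in> Domega f \<omega>"
      using a e unfolding Domega_def by (simp add: scaleR_collapse)
    ultimately show "(U, V) \<in> Domega f \<omega> \<and> Somega f \<omega> (U, V) = (U, V)" by blast
  qed
  have p3: "\<forall>(UV::(real^'k^'m) \<times> (real^'k^'n)) (A::real^'k^'k). UV \<in> Domega f \<omega> \<and> invertible A \<longrightarrow>
        theta A UV \<in> Domega f \<omega> \<and> Somega f \<omega> (theta A UV) = theta A (Somega f \<omega> UV)"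
    using Somega_equiv[OF sconv diff] by blast
  have p4: "\<forall>(UV::(real^'k^'m) \<times> (real^'k^'n)) (A::real^'k^'k) D.
        UV \<in> Domega f \<omega> \<and> Somega f \<omega> UV = UV \<and> (Somega f \<omega> has_derivative D) (at UV)
        \<and> invertible A \<longrightarrow>
        (Somega f \<omega> has_derivative (theta A \<circ> D \<circ> theta (matrix_inv A))) (at (theta A UV))"
    using deriv_equiv[OF sconv diff] by blast
  show ?thesis using p1 p2 p3 p4 by blast
qed

end
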